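(* Let $f\in L^1(\mathbb{R})$ be an even real-valued function and let $\mathcal{W}$ be a $C^1$ weak solution of $\mathcal{W}''(t)+(-1+f(t))\mathcal{W}(t)=0$ on $\mathbb{R}$ such that $\mathcal{W}(t)>0$ for all $t\ge0$ and $\lim_{t\to\infty}\mathcal{W}(t)=0$. Then no nontrivial solution of $\mathcal{Y}''+(-1+f)\mathcal{Y}=0$ vanishes at two distinct values of $t$ if and only if $\mathcal{W}'(0)\le0$.
   Context: A $C^1$ weak solution of $\mathcal{Y}''+k\mathcal{Y}=0$ with $k\in L^1_{loc}$ is a $C^1$ function $\mathcal{Y}$ with $\mathcal{Y}'$ absolutely continuous and $\mathcal{Y}''+k\mathcal{Y}=0$ almost everywhere. *)

theory Defs
  imports "HOL-Analysis.Analysis"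
begin

definition abs_continuous_on :: "real \<Rightarrow> real \<Rightarrow> (real \<Rightarrow> real) \<Rightarrow> bool" where
  "abs_continuous_on a b g \<longleftrightarrow>
     (\<forall>\<epsilon>>0. \<exists>\<delta>>0. \<forall>(n::nat) (l::nat \<Rightarrow> real) (r::nat \<Rightarrow> real).
        (\<forall>i<n. a \<le> l i \<and> l i \<le> r i \<and> r i \<le> b) \<and>
        (\<forall>i<n. \<forall>j<n. i \<noteq> j \<longrightarrow> {l i<..<r i} \<inter> {l j<..<r j} = {}) \<and>
        (\<Sum>i<n. r i - l i) < \<delta>
        \<longrightarrow> (\<Sum>i<n. \<bar>g (r i) - g (l i)\<bar>) < \<epsilon>)"

definition C1_weak_solution :: "(real \<Rightarrow> real) \<Rightarrow> (real \<Rightarrow> real) \<Rightarrow> bool" where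
  "C1_weak_solution k Y \<longleftrightarrow>
     (\<exists>Y'. (\<forall>t. (Y has_real_derivative Y' t) (at t)) \<and>
           continuous_on UNIV Y' \<and>
           (\<forall>a b. abs_continuous_on a b Y') \<and>
           (AE t in lborel. (Y' has_real_derivative (- k t * Y t)) (at t)))"

end

theory Submission
  imports Defs
begin


lemma AE_lborel_negligible:
  assumes "AE x in lborel. P (x::real)"
  obtains N where "negligible N" "\<And>x. x \<notin> N \<Longrightarrow> P x"
proof -
  from assms obtain N where N: "{x \<in> space lborel. \<not> P x} \<subseteq> N" "emeasure lborel N = 0" "N \<in> sets lborel"
    by (rule AE_E)
  have "N \<in> null_sets lborel" using N by auto
  then have "N \<in> null_sets lebesgue" by (rule null_sets_completionI)
  then have "negligible N" by (simp add: negligible_iff_null_sets)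
  then show ?thesis using that N(1) by auto
qed

lemma deriv0_local:
  assumes "(g has_real_derivative 0) (at x)" "e > 0"
  shows "\<exists>r>0. \<forall>y. \<bar>y - x\<bar> < r \<longrightarrow> \<bar>g y - g x\<bar> \<le> e * \<bar>y - x\<bar>"
proof -
  have "((\<lambda>y. (g y - g x) / (y - x)) \<longlongrightarrow> 0) (at x)"
    using assms(1) by (simp add: has_field_derivative_iff)
  then have "\<forall>\<^sub>F y in at x. dist ((g y - g x) / (y - x)) 0 < e"
    using assms(2) by (rule tendstoD)
  then obtain d where d: "d > 0" "\<And>y. y \<noteq> x \<Longrightarrow> dist y x < d \<Longrightarrow> dist ((g y - g x) / (y - x)) 0 < e"
    unfolding eventually_at by blast
  show ?thesis
  proof (intro exI[of _ d] conjI allI impI)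
    fix y assume y: "\<bar>y - x\<bar> < d"
    show "\<bar>g y - g x\<bar> \<le> e * \<bar>y - x\<bar>"
    proof (cases "y = x")
      case False
      then have "\<bar>(g y - g x) / (y - x)\<bar> < e" using d(2)[of y] y by (simp add: dist_real_def)
      then show ?thesis using False by (simp add: abs_divide divide_less_eq)
    qed simp
  qed (use d in auto)
qed



lemma ac_zero_deriv:
  fixes g :: "real \<Rightarrow> real"
  assumes ab: "a \<le> b" and ac: "abs_continuous_on a b g" and N: "negligible N"
    and d: "\<And>x. x \<in> {a..b} - N \<Longrightarrow> (g has_real_derivative 0) (at x)"
  shows "g b = g a"
proof -
  have "\<bar>g b - g a\<bar> \<le> e" if e: "e > 0" for e
  proof -
    define e1 where "e1 = e / (2 * (b - a + 1))"
    have e1: "e1 > 0" using e ab by (simp add: e1_def)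
    have e2: "e/2 > 0" using e by simp
    have ex: "\<exists>\<delta>>0. \<forall>(n::nat) (l::nat\<Rightarrow>real) (r::nat\<Rightarrow>real). (\<forall>i<n. a \<le> l i \<and> l i \<le> r i \<and> r i \<le> b) \<and>
        (\<forall>i<n. \<forall>j<n. i \<noteq> j \<longrightarrow> {l i<..<r i} \<inter> {l j<..<r j} = {}) \<and>
        (\<Sum>i<n. r i - l i) < \<delta> \<longrightarrow> (\<Sum>i<n. \<bar>g (r i) - g (l i)\<bar>) < e/2"
      by (rule mp[OF spec[OF ac[unfolded abs_continuous_on_def], of "e/2"] e2])
    then obtain \<delta> where \<delta>: "\<delta> > 0" and acd0: "\<forall>(n::nat) (l::nat\<Rightarrow>real) (r::nat\<Rightarrow>real). (\<forall>i<n. a \<le> l i \<and> l i \<le> r i \<and> r i \<le> b) \<and>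
        (\<forall>i<n. \<forall>j<n. i \<noteq> j \<longrightarrow> {l i<..<r i} \<inter> {l j<..<r j} = {}) \<and>
        (\<Sum>i<n. r i - l i) < \<delta> \<longrightarrow> (\<Sum>i<n. \<bar>g (r i) - g (l i)\<bar>) < e/2"
      by (rule exE) (rule that, (erule conjunct1), (erule conjunct2))
    have hi: "(indicator N has_integral (0::real)) (cbox a b)"
      using N unfolding negligible_def by (elim allE)
    have "\<exists>\<gamma>. gauge \<gamma> \<and> (\<forall>\<D>. \<D> tagged_division_of (cbox a b) \<and> \<gamma> fine \<D> \<longrightarrow>
         norm ((\<Sum>(x, k)\<in>\<D>. measure lborel k *\<^sub>R indicator N x) - (0::real)) < \<delta>)"
      by (rule mp[OF spec[OF hi[unfolded has_integral]] \<delta>])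
    then obtain \<gamma>2 where g2: "gauge \<gamma>2" and
      g2d0: "\<forall>\<D>. \<D> tagged_division_of (cbox a b) \<and> \<gamma>2 fine \<D> \<longrightarrow>
         norm ((\<Sum>(x, k)\<in>\<D>. measure lborel k *\<^sub>R indicator N x) - (0::real)) < \<delta>"
      by (rule exE) (rule that, (erule conjunct1), (erule conjunct2))
    have g2d: "norm ((\<Sum>(x, k)\<in>\<D>. measure lborel k *\<^sub>R indicator N x) - (0::real)) < \<delta>"
      if "\<D> tagged_division_of (cbox a b)" "\<gamma>2 fine \<D>" for \<D>
      using g2d0 that by blast
    define P where "P = (\<lambda>x r. r > 0 \<and> (\<forall>y. \<bar>y - x\<bar> < r \<longrightarrow> \<bar>g y - g x\<bar> \<le> e1 * \<bar>y - x\<bar>))"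
    define r where "r = (\<lambda>x. if x \<in> {a..b} - N then (SOME r. P x r) else 1)"
    have rP: "P x (r x)" if "x \<in> {a..b} - N" for x
    proof -
      have "\<exists>r. P x r" unfolding P_def by (rule deriv0_local[OF d[OF that] e1])
      then have "P x (SOME r. P x r)" by (rule someI_ex)
      then show ?thesis using that unfolding r_def by simp
    qed
    have rpos: "r x > 0" for x
    proof (cases "x \<in> {a..b} - N")
      case True then show ?thesis using rP[OF True] unfolding P_def by blast
    next
      case False then show ?thesis unfolding r_def by auto
    qed
    have gauge: "gauge (\<lambda>x. ball x (r x) \<inter> \<gamma>2 x)"
      by (intro gauge_Int gauge_ball_dependent g2) (simp add: rpos)
    obtain p where p: "p tagged_division_of (cbox a b)" and fine: "(\<lambda>x. ball x (r x) \<inter> \<gamma>2 x) fine p"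
      by (rule fine_division_exists[OF gauge])
    have fin: "finite p" using tagged_division_ofD(1)[OF p] .
    have fine2: "\<gamma>2 fine p" using fine unfolding fine_def by auto
    have p': "p tagged_division_of {a..b}" using p by simp
    have tele: "(\<Sum>(x,K)\<in>p. g (Sup K) - g (Inf K)) = g b - g a"
      by (rule additive_tagged_division_1[OF ab p'])
    have Kform: "\<exists>u v. K = {u..v} \<and> u \<le> v \<and> a \<le> u \<and> v \<le> b \<and> u \<le> x \<and> x \<le> v" if xK0: "(x,K) \<in> p" for x K
    proof -
      obtain u v where K: "K = cbox u v" using tagged_division_ofD(4)[OF p xK0] by blast
      have "x \<in> K" "K \<subseteq> cbox a b" using tagged_division_ofD(2,3)[OF p xK0] by auto
      then show ?thesis using K by auto
    qed
    define p1 where "p1 = {(x,K) \<in> p. x \<notin> N}"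
    define p2 where "p2 = {(x,K) \<in> p. x \<in> N}"
    have p12: "p = p1 \<union> p2" "p1 \<inter> p2 = {}" unfolding p1_def p2_def by auto
    have fin1: "finite p1" "finite p2" unfolding p1_def p2_def by (rule finite_subset[OF _ fin], force)+
    have b1: "\<bar>g (Sup K) - g (Inf K)\<bar> \<le> e1 * measure lborel K" if "(x,K) \<in> p1" for x K
    proof -
      have xK: "(x,K) \<in> p" "x \<notin> N" using that unfolding p1_def by auto
      obtain u v where uv: "K = {u..v}" "u \<le> v" "a \<le> u" "v \<le> b" "u \<le> x" "x \<le> v"
        using Kform[OF xK(1)] by blast
      have "K \<subseteq> ball x (r x)" using fine xK(1) unfolding fine_def by blast
      moreover have "u \<in> K" "v \<in> K" using uv by auto
      ultimately have "u \<in> ball x (r x)" "v \<in> ball x (r x)" by auto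
      then have "\<bar>u - x\<bar> < r x" "\<bar>v - x\<bar> < r x" by (auto simp: dist_real_def)
      moreover have "P x (r x)" using rP xK uv by auto
      ultimately have "\<bar>g u - g x\<bar> \<le> e1 * \<bar>u - x\<bar>" "\<bar>g v - g x\<bar> \<le> e1 * \<bar>v - x\<bar>"
        unfolding P_def by blast+
      then have "\<bar>g v - g u\<bar> \<le> e1 * (v - u)" using uv by (auto simp: abs_if algebra_simps split: if_splits)
      then show ?thesis using uv by simp
    qed
    have s1: "(\<Sum>(x,K)\<in>p1. \<bar>g (Sup K) - g (Inf K)\<bar>) \<le> e1 * (b - a)"
    proof -
      have "(\<Sum>(x,K)\<in>p1. \<bar>g (Sup K) - g (Inf K)\<bar>) \<le> (\<Sum>(x,K)\<in>p1. e1 * measure lborel K)"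
        by (rule sum_mono) (use b1 in auto)
      also have "\<dots> = e1 * (\<Sum>(x,K)\<in>p1. measure lborel K)"
        by (simp add: sum_distrib_left case_prod_unfold)
      also have "(\<Sum>(x,K)\<in>p1. measure lborel K) \<le> (\<Sum>(x,K)\<in>p. measure lborel K)"
        by (rule sum_mono2[OF fin]) (auto simp: p1_def)
      also have "(\<Sum>(x,K)\<in>p. measure lborel K) = measure lborel (cbox a b)"
        by (rule additive_content_tagged_division[OF p])
      finally show ?thesis using e1 ab by (simp add: mult_left_mono)
    qed
    have "(\<Sum>(x, k)\<in>p. measure lborel k *\<^sub>R (indicator N x :: real)) = (\<Sum>(x, k)\<in>p2. measure lborel k)"
    proof -
      have "(\<Sum>(x, k)\<in>p. measure lborel k *\<^sub>R (indicator N x :: real)) = (\<Sum>(x, k)\<in>p2. measure lborel k *\<^sub>R (indicator N x :: real))"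
        by (rule sum.mono_neutral_right[OF fin]) (auto simp: p2_def indicator_def of_bool_def split: if_splits)
      also have "\<dots> = (\<Sum>(x, k)\<in>p2. measure lborel k)"
        by (rule sum.cong) (auto simp: p2_def)
      finally show ?thesis .
    qed
    then have c2: "(\<Sum>(x, k)\<in>p2. measure lborel k) < \<delta>" using g2d[OF p fine2] by simp
    obtain h where h: "bij_betw h {0..<card p2} p2" using ex_bij_betw_nat_finite[OF fin1(2)] by blast
    define n where "n = card p2"
    define l where "l = (\<lambda>i. Inf (snd (h i)))"
    define rr where "rr = (\<lambda>i. Sup (snd (h i)))"
    have hin: "h i \<in> p2" if "i < n" for i using h that unfolding n_def bij_betw_def by auto
    have hform: "\<exists>u v. snd (h i) = {u..v} \<and> u \<le> v \<and> a \<le> u \<and> v \<le> b \<and> l i = u \<and> rr i = v" if "i < n" for i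
    proof -
      obtain x K where xK: "h i = (x,K)" by force
      have "(x,K) \<in> p" using hin[OF that] xK unfolding p2_def by auto
      then obtain u v where "K = {u..v}" "u \<le> v" "a \<le> u" "v \<le> b" using Kform by blast
      then show ?thesis using xK unfolding l_def rr_def by auto
    qed
    have cond1: "\<forall>i<n. a \<le> l i \<and> l i \<le> rr i \<and> rr i \<le> b"
    proof (intro allI impI)
      fix i assume "i < n"
      then obtain u v where "snd (h i) = {u..v}" "u \<le> v" "a \<le> u" "v \<le> b" "l i = u" "rr i = v"
        using hform by blast
      then show "a \<le> l i \<and> l i \<le> rr i \<and> rr i \<le> b" by simp
    qed
    have cond2: "\<forall>i<n. \<forall>j<n. i \<noteq> j \<longrightarrow> {l i<..<rr i} \<inter> {l j<..<rr j} = {}"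
    proof (intro allI impI)
      fix i j assume ij: "i < n" "j < n" "i \<noteq> j"
      have hne: "h i \<noteq> h j" using h ij unfolding bij_betw_def inj_on_def n_def by auto
      obtain xi Ki where i: "h i = (xi,Ki)" by force
      obtain xj Kj where j: "h j = (xj,Kj)" by force
      have "(xi,Ki) \<in> p" "(xj,Kj) \<in> p" using hin[OF ij(1)] hin[OF ij(2)] i j unfolding p2_def by auto
      then have "interior Ki \<inter> interior Kj = {}" using p hne i j by (metis tagged_division_ofD(5))
      moreover obtain ui vi where "Ki = {ui..vi}" "l i = ui" "rr i = vi" using hform[OF ij(1)] i by auto
      moreover obtain uj vj where "Kj = {uj..vj}" "l j = uj" "rr j = vj" using hform[OF ij(2)] j by auto
      ultimately show "{l i<..<rr i} \<inter> {l j<..<rr j} = {}" by simp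
    qed
    have "(\<Sum>i<n. rr i - l i) = (\<Sum>i<n. measure lborel (snd (h i)))"
      by (rule sum.cong) (use hform in auto)
    also have "\<dots> = (\<Sum>(x, k)\<in>p2. measure lborel k)"
    proof -
      have "(\<Sum>(x, k)\<in>p2. measure lborel k) = (\<Sum>i\<in>{0..<n}. (\<lambda>(x, k). measure lborel k) (h i))"
        using sum.reindex_bij_betw[OF h, of "\<lambda>(x, k). measure lborel k"] unfolding n_def by simp
      then show ?thesis by (simp add: atLeast0LessThan case_prod_unfold)
    qed
    finally have cond3: "(\<Sum>i<n. rr i - l i) < \<delta>" using c2 by simp
    have s2': "(\<Sum>i<n. \<bar>g (rr i) - g (l i)\<bar>) < e/2"
      by (rule acd0[rule_format]) (intro conjI cond1 cond2 cond3)
    have s2: "(\<Sum>(x,K)\<in>p2. \<bar>g (Sup K) - g (Inf K)\<bar>) < e/2"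
    proof -
      have "(\<Sum>(x,K)\<in>p2. \<bar>g (Sup K) - g (Inf K)\<bar>) = (\<Sum>i\<in>{0..<n}. (\<lambda>(x,K). \<bar>g (Sup K) - g (Inf K)\<bar>) (h i))"
        using sum.reindex_bij_betw[OF h, of "\<lambda>(x,K). \<bar>g (Sup K) - g (Inf K)\<bar>"] unfolding n_def by simp
      also have "\<dots> = (\<Sum>i<n. \<bar>g (rr i) - g (l i)\<bar>)"
        by (simp add: atLeast0LessThan case_prod_unfold l_def rr_def)
      finally show ?thesis using s2' by simp
    qed
    have "\<bar>g b - g a\<bar> = \<bar>\<Sum>(x,K)\<in>p. g (Sup K) - g (Inf K)\<bar>" using tele by simp
    also have "\<dots> \<le> (\<Sum>(x,K)\<in>p. \<bar>g (Sup K) - g (Inf K)\<bar>)"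
      by (rule order_trans[OF sum_abs]) (simp add: case_prod_unfold)
    also have "\<dots> = (\<Sum>(x,K)\<in>p1. \<bar>g (Sup K) - g (Inf K)\<bar>) + (\<Sum>(x,K)\<in>p2. \<bar>g (Sup K) - g (Inf K)\<bar>)"
      unfolding p12(1) by (rule sum.union_disjoint) (use fin1 p12 in auto)
    also have "\<dots> \<le> e1 * (b - a) + e/2" using s1 s2 by simp
    also have "e1 * (b - a) \<le> e/2"
    proof -
      have "e1 * (b - a) = e * (b - a) / (2 * (b - a + 1))" by (simp add: e1_def)
      also have "\<dots> \<le> e / 2" using e ab by (simp add: divide_le_eq field_simps)
      finally show ?thesis .
    qed
    finally show ?thesis by simp
  qed
  then have "\<bar>g b - g a\<bar> \<le> 0"
    by (rule field_le_epsilon) simp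
  then show ?thesis by simp
qed



lemma ac_dom2:
  fixes F g h :: "real \<Rightarrow> real"
  assumes acg: "abs_continuous_on a b g" and ach: "abs_continuous_on a b h" and C: "C \<ge> 0"
    and dom: "\<And>l r. a \<le> l \<Longrightarrow> l \<le> r \<Longrightarrow> r \<le> b \<Longrightarrow> \<bar>F r - F l\<bar> \<le> C * (\<bar>g r - g l\<bar> + \<bar>h r - h l\<bar>)"
  shows "abs_continuous_on a b F"
  unfolding abs_continuous_on_def
proof (intro allI impI)
  fix \<epsilon> :: real assume \<epsilon>: "\<epsilon> > 0"
  define \<epsilon>' where "\<epsilon>' = \<epsilon> / (2 * (C + 1))"
  have \<epsilon>': "\<epsilon>' > 0" using \<epsilon> C by (simp add: \<epsilon>'_def)
  obtain \<delta>1 where d1: "\<delta>1 > 0" and A1: "\<forall>(n::nat) (l::nat\<Rightarrow>real) (r::nat\<Rightarrow>real). (\<forall>i<n. a \<le> l i \<and> l i \<le> r i \<and> r i \<le> b) \<and>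
        (\<forall>i<n. \<forall>j<n. i \<noteq> j \<longrightarrow> {l i<..<r i} \<inter> {l j<..<r j} = {}) \<and>
        (\<Sum>i<n. r i - l i) < \<delta>1 \<longrightarrow> (\<Sum>i<n. \<bar>g (r i) - g (l i)\<bar>) < \<epsilon>'"
    using mp[OF spec[OF acg[unfolded abs_continuous_on_def], of \<epsilon>'] \<epsilon>'] by (elim exE conjE)
  obtain \<delta>2 where d2: "\<delta>2 > 0" and A2: "\<forall>(n::nat) (l::nat\<Rightarrow>real) (r::nat\<Rightarrow>real). (\<forall>i<n. a \<le> l i \<and> l i \<le> r i \<and> r i \<le> b) \<and>
        (\<forall>i<n. \<forall>j<n. i \<noteq> j \<longrightarrow> {l i<..<r i} \<inter> {l j<..<r j} = {}) \<and>
        (\<Sum>i<n. r i - l i) < \<delta>2 \<longrightarrow> (\<Sum>i<n. \<bar>h (r i) - h (l i)\<bar>) < \<epsilon>'"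
    using mp[OF spec[OF ach[unfolded abs_continuous_on_def], of \<epsilon>'] \<epsilon>'] by (elim exE conjE)
  show "\<exists>\<delta>>0. \<forall>(n::nat) (l::nat\<Rightarrow>real) (r::nat\<Rightarrow>real). (\<forall>i<n. a \<le> l i \<and> l i \<le> r i \<and> r i \<le> b) \<and>
        (\<forall>i<n. \<forall>j<n. i \<noteq> j \<longrightarrow> {l i<..<r i} \<inter> {l j<..<r j} = {}) \<and>
        (\<Sum>i<n. r i - l i) < \<delta> \<longrightarrow> (\<Sum>i<n. \<bar>F (r i) - F (l i)\<bar>) < \<epsilon>"
  proof (intro exI[of _ "min \<delta>1 \<delta>2"] conjI allI impI)
    show "min \<delta>1 \<delta>2 > 0" using d1 d2 by simp
    fix n :: nat and l r :: "nat \<Rightarrow> real"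
    assume H: "(\<forall>i<n. a \<le> l i \<and> l i \<le> r i \<and> r i \<le> b) \<and>
        (\<forall>i<n. \<forall>j<n. i \<noteq> j \<longrightarrow> {l i<..<r i} \<inter> {l j<..<r j} = {}) \<and>
        (\<Sum>i<n. r i - l i) < min \<delta>1 \<delta>2"
    have s1: "(\<Sum>i<n. \<bar>g (r i) - g (l i)\<bar>) < \<epsilon>'"
      by (rule A1[rule_format]) (use H in auto)
    have s2: "(\<Sum>i<n. \<bar>h (r i) - h (l i)\<bar>) < \<epsilon>'"
      by (rule A2[rule_format]) (use H in auto)
    have "(\<Sum>i<n. \<bar>F (r i) - F (l i)\<bar>) \<le> (\<Sum>i<n. C * (\<bar>g (r i) - g (l i)\<bar> + \<bar>h (r i) - h (l i)\<bar>))"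
      by (rule sum_mono) (use H dom in auto)
    also have "\<dots> = C * ((\<Sum>i<n. \<bar>g (r i) - g (l i)\<bar>) + (\<Sum>i<n. \<bar>h (r i) - h (l i)\<bar>))"
      by (simp add: sum_distrib_left sum.distrib distrib_left)
    also have "\<dots> \<le> C * (2 * \<epsilon>')"
      using s1 s2 C by (intro mult_left_mono) auto
    also have "\<dots> < \<epsilon>"
    proof -
      have "C * (2 * \<epsilon>') = \<epsilon> * (C / (C + 1))" using C by (simp add: \<epsilon>'_def field_simps)
      also have "\<dots> < \<epsilon> * 1" using C \<epsilon> by (intro mult_strict_left_mono) auto
      finally show ?thesis by simp
    qed
    finally show "(\<Sum>i<n. \<bar>F (r i) - F (l i)\<bar>) < \<epsilon>" .
  qed
qed

lemma ac_lipschitz: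
  fixes g :: "real \<Rightarrow> real"
  assumes M: "\<And>x y. a \<le> x \<Longrightarrow> x \<le> y \<Longrightarrow> y \<le> b \<Longrightarrow> \<bar>g y - g x\<bar> \<le> M * (y - x)"
  shows "abs_continuous_on a b g"
  unfolding abs_continuous_on_def
proof (intro allI impI)
  fix \<epsilon> :: real assume \<epsilon>: "\<epsilon> > 0"
  define M' where "M' = \<bar>M\<bar> + 1"
  have M': "M' > 0" "M \<le> M'" by (auto simp: M'_def)
  show "\<exists>\<delta>>0. \<forall>(n::nat) (l::nat\<Rightarrow>real) (r::nat\<Rightarrow>real). (\<forall>i<n. a \<le> l i \<and> l i \<le> r i \<and> r i \<le> b) \<and>
        (\<forall>i<n. \<forall>j<n. i \<noteq> j \<longrightarrow> {l i<..<r i} \<inter> {l j<..<r j} = {}) \<and>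
        (\<Sum>i<n. r i - l i) < \<delta> \<longrightarrow> (\<Sum>i<n. \<bar>g (r i) - g (l i)\<bar>) < \<epsilon>"
  proof (intro exI[of _ "\<epsilon> / M'"] conjI allI impI)
    show "\<epsilon> / M' > 0" using \<epsilon> M' by simp
    fix n :: nat and l r :: "nat \<Rightarrow> real"
    assume H: "(\<forall>i<n. a \<le> l i \<and> l i \<le> r i \<and> r i \<le> b) \<and>
        (\<forall>i<n. \<forall>j<n. i \<noteq> j \<longrightarrow> {l i<..<r i} \<inter> {l j<..<r j} = {}) \<and>
        (\<Sum>i<n. r i - l i) < \<epsilon> / M'"
    have "(\<Sum>i<n. \<bar>g (r i) - g (l i)\<bar>) \<le> (\<Sum>i<n. M' * (r i - l i))"
    proof (rule sum_mono)
      fix i assume "i \<in> {..<n}"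
      then have i: "a \<le> l i" "l i \<le> r i" "r i \<le> b" using H by auto
      have "\<bar>g (r i) - g (l i)\<bar> \<le> M * (r i - l i)" using M[OF i] .
      also have "\<dots> \<le> M' * (r i - l i)" using M' i by (intro mult_right_mono) auto
      finally show "\<bar>g (r i) - g (l i)\<bar> \<le> M' * (r i - l i)" .
    qed
    also have "\<dots> = M' * (\<Sum>i<n. r i - l i)" by (simp add: sum_distrib_left)
    also have "\<dots> < M' * (\<epsilon> / M')" using H M' by (intro mult_strict_left_mono) auto
    also have "\<dots> = \<epsilon>" using M' by simp
    finally show "(\<Sum>i<n. \<bar>g (r i) - g (l i)\<bar>) < \<epsilon>" .
  qed
qed

lemma ac_reflect:
  fixes g :: "real \<Rightarrow> real"
  assumes acg: "abs_continuous_on (-b) (-a) g"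
  shows "abs_continuous_on a b (\<lambda>t. g (- t))"
  unfolding abs_continuous_on_def
proof (intro allI impI)
  fix \<epsilon> :: real assume \<epsilon>: "\<epsilon> > 0"
  obtain \<delta> where d: "\<delta> > 0" and A: "\<forall>(n::nat) (l::nat\<Rightarrow>real) (r::nat\<Rightarrow>real). (\<forall>i<n. -b \<le> l i \<and> l i \<le> r i \<and> r i \<le> -a) \<and>
        (\<forall>i<n. \<forall>j<n. i \<noteq> j \<longrightarrow> {l i<..<r i} \<inter> {l j<..<r j} = {}) \<and>
        (\<Sum>i<n. r i - l i) < \<delta> \<longrightarrow> (\<Sum>i<n. \<bar>g (r i) - g (l i)\<bar>) < \<epsilon>"
    using mp[OF spec[OF acg[unfolded abs_continuous_on_def], of \<epsilon>] \<epsilon>] by (elim exE conjE)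
  show "\<exists>\<delta>>0. \<forall>(n::nat) (l::nat\<Rightarrow>real) (r::nat\<Rightarrow>real). (\<forall>i<n. a \<le> l i \<and> l i \<le> r i \<and> r i \<le> b) \<and>
        (\<forall>i<n. \<forall>j<n. i \<noteq> j \<longrightarrow> {l i<..<r i} \<inter> {l j<..<r j} = {}) \<and>
        (\<Sum>i<n. r i - l i) < \<delta> \<longrightarrow> (\<Sum>i<n. \<bar>g (- r i) - g (- l i)\<bar>) < \<epsilon>"
  proof (intro exI[of _ \<delta>] conjI allI impI)
    show "\<delta> > 0" using d .
    fix n :: nat and l r :: "nat \<Rightarrow> real"
    assume H: "(\<forall>i<n. a \<le> l i \<and> l i \<le> r i \<and> r i \<le> b) \<and>
        (\<forall>i<n. \<forall>j<n. i \<noteq> j \<longrightarrow> {l i<..<r i} \<inter> {l j<..<r j} = {}) \<and>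
        (\<Sum>i<n. r i - l i) < \<delta>"
    have c1: "\<forall>i<n. -b \<le> - r i \<and> - r i \<le> - l i \<and> - l i \<le> -a" using H by auto
    have c2: "\<forall>i<n. \<forall>j<n. i \<noteq> j \<longrightarrow> {- r i<..<- l i} \<inter> {- r j<..<- l j} = {}"
    proof (intro allI impI)
      fix i j assume ij: "i < n" "j < n" "i \<noteq> j"
      have e: "{l i<..<r i} \<inter> {l j<..<r j} = {}" using H ij by blast
      show "{- r i<..<- l i} \<inter> {- r j<..<- l j} = {}"
      proof (rule equals0I)
        fix x assume "x \<in> {- r i<..<- l i} \<inter> {- r j<..<- l j}"
        then have "-x \<in> {l i<..<r i} \<inter> {l j<..<r j}" by auto
        then show False using e by blast
      qed
    qed
    have c3: "(\<Sum>i<n. - l i - - r i) < \<delta>" using H by simp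
    have "(\<Sum>i<n. \<bar>g (- l i) - g (- r i)\<bar>) < \<epsilon>"
      by (rule A[rule_format, of n "\<lambda>i. - r i" "\<lambda>i. - l i", simplified]) (use c1 c2 c3 in auto)
    then show "(\<Sum>i<n. \<bar>g (- r i) - g (- l i)\<bar>) < \<epsilon>" by (simp add: abs_minus_commute)
  qed
qed



definition sol :: "(real \<Rightarrow> real) \<Rightarrow> (real \<Rightarrow> real) \<Rightarrow> (real \<Rightarrow> real) \<Rightarrow> bool" where
  "sol k Y Y1 \<longleftrightarrow> (\<forall>t. (Y has_real_derivative Y1 t) (at t)) \<and> continuous_on UNIV Y1 \<and>
     (\<forall>a b. abs_continuous_on a b Y1) \<and> (AE t in lborel. (Y1 has_real_derivative (- k t * Y t)) (at t))"

lemma C1_sol: "C1_weak_solution k Y \<longleftrightarrow> (\<exists>Y1. sol k Y Y1)"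
  by (simp add: C1_weak_solution_def sol_def)

lemma cont_bound:
  fixes f :: "real \<Rightarrow> real"
  assumes "continuous_on {a..b} f"
  obtains M where "\<And>x. x \<in> {a..b} \<Longrightarrow> \<bar>f x\<bar> \<le> M"
proof -
  have "bounded (f ` {a..b})" by (rule compact_imp_bounded[OF compact_continuous_image[OF assms compact_Icc]])
  then obtain M where "\<forall>y\<in>f ` {a..b}. norm y \<le> M" unfolding bounded_iff by blast
  then show ?thesis using that by force
qed

lemma mvt_deriv:
  fixes f :: "real \<Rightarrow> real"
  assumes xy: "x < y" and d: "\<And>t. x \<le> t \<Longrightarrow> t \<le> y \<Longrightarrow> (f has_real_derivative f' t) (at t)"
  shows "\<exists>z. x < z \<and> z < y \<and> f y - f x = (y - x) * f' z"
proof -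
  have c: "continuous_on {x..y} f"
    by (rule continuous_at_imp_continuous_on) (use d DERIV_isCont in fastforce)
  have "\<And>t. x < t \<Longrightarrow> t < y \<Longrightarrow> f differentiable (at t)"
    using d by (meson less_imp_le real_differentiable_def)
  from MVT[OF xy c this] obtain l z where lz: "x < z" "z < y" "DERIV f z :> l" "f y - f x = (y - x) * l"
    by blast
  have "l = f' z" using DERIV_unique[OF lz(3) d[of z]] lz by auto
  then show ?thesis using lz by blast
qed

lemma sol_cont: "sol k Y Y1 \<Longrightarrow> continuous_on UNIV Y"
  unfolding sol_def by (meson DERIV_isCont continuous_at_imp_continuous_on)

lemma sol_Y_ac:
  assumes "sol k Y Y1"
  shows "abs_continuous_on a b Y"
proof -
  have dY: "\<And>t. (Y has_real_derivative Y1 t) (at t)" and cY1: "continuous_on UNIV Y1"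
    using assms unfolding sol_def by auto
  obtain M where M: "\<And>x. x \<in> {a..b} \<Longrightarrow> \<bar>Y1 x\<bar> \<le> M"
    using cont_bound[OF continuous_on_subset[OF cY1 subset_UNIV]] by blast
  show ?thesis
  proof (rule ac_lipschitz[where M=M])
    fix x y assume xy: "a \<le> x" "x \<le> y" "y \<le> b"
    show "\<bar>Y y - Y x\<bar> \<le> M * (y - x)"
    proof (cases "x = y")
      case False
      then have "x < y" using xy by simp
      from mvt_deriv[OF this dY] obtain z where z: "x < z" "z < y" "Y y - Y x = (y - x) * Y1 z" by blast
      have "\<bar>Y1 z\<bar> \<le> M" using M z xy by auto
      then show ?thesis using z xy by (simp add: abs_mult mult.commute mult_right_mono)
    qed simp
  qed
qed

lemma ac_mult:
  fixes g h :: "real \<Rightarrow> real"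
  assumes "abs_continuous_on a b g" "abs_continuous_on a b h"
    and bg: "\<And>x. x \<in> {a..b} \<Longrightarrow> \<bar>g x\<bar> \<le> M" and bh: "\<And>x. x \<in> {a..b} \<Longrightarrow> \<bar>h x\<bar> \<le> M"
  shows "abs_continuous_on a b (\<lambda>x. g x * h x)"
proof (rule ac_dom2[OF assms(1,2), where C="\<bar>M\<bar>"])
  fix l r assume lr: "a \<le> l" "l \<le> r" "r \<le> b"
  have "g r * h r - g l * h l = g r * (h r - h l) + h l * (g r - g l)" by (simp add: algebra_simps)
  then have "\<bar>g r * h r - g l * h l\<bar> \<le> \<bar>g r\<bar> * \<bar>h r - h l\<bar> + \<bar>h l\<bar> * \<bar>g r - g l\<bar>"
    by (metis abs_mult abs_triangle_ineq)
  also have "\<dots> \<le> \<bar>M\<bar> * \<bar>h r - h l\<bar> + \<bar>M\<bar> * \<bar>g r - g l\<bar>"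
  proof -
    have "\<bar>g r\<bar> \<le> \<bar>M\<bar>" "\<bar>h l\<bar> \<le> \<bar>M\<bar>" using bg[of r] bh[of l] lr by auto
    then show ?thesis by (intro add_mono mult_right_mono) auto
  qed
  finally show "\<bar>g r * h r - g l * h l\<bar> \<le> \<bar>M\<bar> * (\<bar>g r - g l\<bar> + \<bar>h r - h l\<bar>)"
    by (simp add: algebra_simps)
qed simp

lemma ac_lin:
  fixes g h :: "real \<Rightarrow> real"
  assumes "abs_continuous_on a b g" "abs_continuous_on a b h"
  shows "abs_continuous_on a b (\<lambda>x. \<alpha> * g x + \<beta> * h x)"
proof (rule ac_dom2[OF assms(1,2), where C="\<bar>\<alpha>\<bar> + \<bar>\<beta>\<bar>"])
  fix l r assume lr: "a \<le> l" "l \<le> r" "r \<le> b"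
  have "\<alpha> * g r + \<beta> * h r - (\<alpha> * g l + \<beta> * h l) = \<alpha> * (g r - g l) + \<beta> * (h r - h l)"
    by (simp add: algebra_simps)
  then have "\<bar>\<alpha> * g r + \<beta> * h r - (\<alpha> * g l + \<beta> * h l)\<bar> \<le> \<bar>\<alpha>\<bar> * \<bar>g r - g l\<bar> + \<bar>\<beta>\<bar> * \<bar>h r - h l\<bar>"
    by (metis abs_mult abs_triangle_ineq)
  also have "\<dots> \<le> (\<bar>\<alpha>\<bar> + \<bar>\<beta>\<bar>) * (\<bar>g r - g l\<bar> + \<bar>h r - h l\<bar>)"
    by (simp add: algebra_simps)
  finally show "\<bar>\<alpha> * g r + \<beta> * h r - (\<alpha> * g l + \<beta> * h l)\<bar> \<le> (\<bar>\<alpha>\<bar> + \<bar>\<beta>\<bar>) * (\<bar>g r - g l\<bar> + \<bar>h r - h l\<bar>)" .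
qed simp

lemma wr_const_le:
  assumes Y: "sol k Y Y1" and Z: "sol k Z Z1" and st: "s \<le> t"
  shows "Y t * Z1 t - Y1 t * Z t = Y s * Z1 s - Y1 s * Z s"
proof -
  define Wr where "Wr = (\<lambda>x. Y x * Z1 x - Y1 x * Z x)"
  have dY: "\<And>t. (Y has_real_derivative Y1 t) (at t)" and cY1: "continuous_on UNIV Y1"
    and acY1: "abs_continuous_on s t Y1" and aeY: "AE t in lborel. (Y1 has_real_derivative (- k t * Y t)) (at t)"
    using Y unfolding sol_def by auto
  have dZ: "\<And>t. (Z has_real_derivative Z1 t) (at t)" and cZ1: "continuous_on UNIV Z1"
    and acZ1: "abs_continuous_on s t Z1" and aeZ: "AE t in lborel. (Z1 has_real_derivative (- k t * Z t)) (at t)"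
    using Z unfolding sol_def by auto
  obtain N1 where N1: "negligible N1" "\<And>x. x \<notin> N1 \<Longrightarrow> (Y1 has_real_derivative (- k x * Y x)) (at x)"
    using AE_lborel_negligible[OF aeY] by blast
  obtain N2 where N2: "negligible N2" "\<And>x. x \<notin> N2 \<Longrightarrow> (Z1 has_real_derivative (- k x * Z x)) (at x)"
    using AE_lborel_negligible[OF aeZ] by blast
  obtain M1 where M1: "\<And>x. x \<in> {s..t} \<Longrightarrow> \<bar>Y x\<bar> \<le> M1"
    using cont_bound[OF continuous_on_subset[OF sol_cont[OF Y] subset_UNIV]] by blast
  obtain M2 where M2: "\<And>x. x \<in> {s..t} \<Longrightarrow> \<bar>Z x\<bar> \<le> M2"
    using cont_bound[OF continuous_on_subset[OF sol_cont[OF Z] subset_UNIV]] by blast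
  obtain M3 where M3: "\<And>x. x \<in> {s..t} \<Longrightarrow> \<bar>Y1 x\<bar> \<le> M3"
    using cont_bound[OF continuous_on_subset[OF cY1 subset_UNIV]] by blast
  obtain M4 where M4: "\<And>x. x \<in> {s..t} \<Longrightarrow> \<bar>Z1 x\<bar> \<le> M4"
    using cont_bound[OF continuous_on_subset[OF cZ1 subset_UNIV]] by blast
  define M where "M = \<bar>M1\<bar> + \<bar>M2\<bar> + \<bar>M3\<bar> + \<bar>M4\<bar>"
  have B: "\<bar>Y x\<bar> \<le> M" "\<bar>Z x\<bar> \<le> M" "\<bar>Y1 x\<bar> \<le> M" "\<bar>Z1 x\<bar> \<le> M" if "x \<in> {s..t}" for x
    using M1[OF that] M2[OF that] M3[OF that] M4[OF that] unfolding M_def by auto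
  have ac1: "abs_continuous_on s t (\<lambda>x. Y x * Z1 x)"
    by (rule ac_mult[OF sol_Y_ac[OF Y] acZ1, where M=M]) (use B in auto)
  have ac2: "abs_continuous_on s t (\<lambda>x. Y1 x * Z x)"
    by (rule ac_mult[OF acY1 sol_Y_ac[OF Z], where M=M]) (use B in auto)
  have acW: "abs_continuous_on s t Wr"
    using ac_lin[OF ac1 ac2, of 1 "-1"] unfolding Wr_def by simp
  have dW: "(Wr has_real_derivative 0) (at x)" if "x \<in> {s..t} - (N1 \<union> N2)" for x
  proof -
    have x: "x \<notin> N1" "x \<notin> N2" using that by auto
    have "(Wr has_real_derivative
        ((Y1 x * Z1 x + (- k x * Z x) * Y x) - ((- k x * Y x) * Z x + Z1 x * Y1 x))) (at x)"
      unfolding Wr_def by (rule DERIV_diff[OF DERIV_mult[OF dY N2(2)[OF x(2)]] DERIV_mult[OF N1(2)[OF x(1)] dZ]])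
    moreover have "(Y1 x * Z1 x + (- k x * Z x) * Y x) - ((- k x * Y x) * Z x + Z1 x * Y1 x) = 0"
      by (simp add: algebra_simps)
    ultimately show ?thesis by simp
  qed
  have "Wr t = Wr s"
    by (rule ac_zero_deriv[OF st acW negligible_Un[OF N1(1) N2(1)] dW])
  then show ?thesis unfolding Wr_def .
qed

lemma wr_const:
  assumes Y: "sol k Y Y1" and Z: "sol k Z Z1"
  shows "Y t * Z1 t - Y1 t * Z t = Y s * Z1 s - Y1 s * Z s"
proof (cases "s \<le> t")
  case True then show ?thesis using wr_const_le[OF Y Z] by blast
next
  case False then show ?thesis using wr_const_le[OF Y Z, of t s] by simp
qed



lemma negligible_AE:
  assumes "negligible (N::real set)" "\<And>x. x \<notin> N \<Longrightarrow> P x"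
  shows "AE x in lborel. P x"
proof -
  have "N \<in> null_sets lebesgue" using assms(1) by (simp add: negligible_iff_null_sets)
  then have "AE x in lebesgue. P x" by (rule AE_I') (use assms(2) in auto)
  then show ?thesis by (simp add: AE_completion_iff)
qed

lemma negligible_uminus:
  assumes "negligible (N::real set)"
  shows "negligible (uminus ` N)"
proof (rule negligible_locally_Lipschitz_image[OF _ assms])
  fix x assume "x \<in> N"
  show "\<exists>T B. open T \<and> x \<in> T \<and> (\<forall>y\<in>N \<inter> T. norm (- y - - x) \<le> B * norm (y - x))"
    by (rule exI[of _ UNIV], rule exI[of _ 1]) (simp add: abs_minus_commute)
qed simp

lemma sol_comb:
  assumes Y: "sol k Y Y1" and Z: "sol k Z Z1"
  shows "sol k (\<lambda>t. \<alpha> * Y t + \<beta> * Z t) (\<lambda>t. \<alpha> * Y1 t + \<beta> * Z1 t)"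
proof -
  have dY: "\<And>t. (Y has_real_derivative Y1 t) (at t)" and cY1: "continuous_on UNIV Y1"
    and acY1: "\<And>a b. abs_continuous_on a b Y1" and aeY: "AE t in lborel. (Y1 has_real_derivative (- k t * Y t)) (at t)"
    using Y unfolding sol_def by auto
  have dZ: "\<And>t. (Z has_real_derivative Z1 t) (at t)" and cZ1: "continuous_on UNIV Z1"
    and acZ1: "\<And>a b. abs_continuous_on a b Z1" and aeZ: "AE t in lborel. (Z1 has_real_derivative (- k t * Z t)) (at t)"
    using Z unfolding sol_def by auto
  have 1: "\<forall>t. ((\<lambda>t. \<alpha> * Y t + \<beta> * Z t) has_real_derivative \<alpha> * Y1 t + \<beta> * Z1 t) (at t)"
    using DERIV_add[OF DERIV_cmult[OF dY] DERIV_cmult[OF dZ]] by blast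
  have 2: "continuous_on UNIV (\<lambda>t. \<alpha> * Y1 t + \<beta> * Z1 t)"
    using continuous_on_add[OF continuous_on_mult_left[OF cY1] continuous_on_mult_left[OF cZ1]] by blast
  have 3: "\<forall>a b. abs_continuous_on a b (\<lambda>t. \<alpha> * Y1 t + \<beta> * Z1 t)"
    using ac_lin[OF acY1 acZ1] by blast
  have 4: "AE t in lborel. ((\<lambda>t. \<alpha> * Y1 t + \<beta> * Z1 t) has_real_derivative (- k t * (\<alpha> * Y t + \<beta> * Z t))) (at t)"
    using aeY aeZ
  proof eventually_elim
    case (elim t)
    have "((\<lambda>t. \<alpha> * Y1 t + \<beta> * Z1 t) has_real_derivative \<alpha> * (- k t * Y t) + \<beta> * (- k t * Z t)) (at t)"
      using DERIV_add[OF DERIV_cmult[OF elim(1)] DERIV_cmult[OF elim(2)]] .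
    moreover have "\<alpha> * (- k t * Y t) + \<beta> * (- k t * Z t) = - k t * (\<alpha> * Y t + \<beta> * Z t)"
      by (simp add: algebra_simps)
    ultimately show ?case by simp
  qed
  show ?thesis unfolding sol_def using 1 2 3 4 by blast
qed

lemma sol_reflect:
  assumes W: "sol k W W1" and ev: "\<And>t. k (- t) = k t"
  shows "sol k (\<lambda>t. W (- t)) (\<lambda>t. - W1 (- t))"
proof -
  have dW: "\<And>t. (W has_real_derivative W1 t) (at t)" and cW1: "continuous_on UNIV W1"
    and acW1: "\<And>a b. abs_continuous_on a b W1" and aeW: "AE t in lborel. (W1 has_real_derivative (- k t * W t)) (at t)"
    using W unfolding sol_def by auto
  have dm: "((\<lambda>x::real. - x) has_real_derivative - 1) (at t)" for t
    using DERIV_minus[OF DERIV_ident] .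
  have 1: "\<forall>t. ((\<lambda>t. W (- t)) has_real_derivative - W1 (- t)) (at t)"
  proof
    fix t
    show "((\<lambda>t. W (- t)) has_real_derivative - W1 (- t)) (at t)"
      using DERIV_chain2[OF dW[of "- t"] dm[of t]] by simp
  qed
  have "continuous_on UNIV (W1 \<circ> uminus)"
    by (rule continuous_on_compose) (auto intro: continuous_on_minus continuous_on_id continuous_on_subset[OF cW1])
  then have 2: "continuous_on UNIV (\<lambda>t. - W1 (- t))"
    using continuous_on_minus by (simp add: o_def)
  have 3: "\<forall>a b. abs_continuous_on a b (\<lambda>t. - W1 (- t))"
  proof (intro allI)
    fix a b
    have r: "abs_continuous_on a b (\<lambda>t. W1 (- t))" by (rule ac_reflect[OF acW1])
    show "abs_continuous_on a b (\<lambda>t. - W1 (- t))"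
      using ac_lin[OF r r, of "-1" 0] by simp
  qed
  obtain N where N: "negligible N" "\<And>x. x \<notin> N \<Longrightarrow> (W1 has_real_derivative (- k x * W x)) (at x)"
    using AE_lborel_negligible[OF aeW] by blast
  have 4: "AE t in lborel. ((\<lambda>t. - W1 (- t)) has_real_derivative (- k t * W (- t))) (at t)"
  proof (rule negligible_AE[OF negligible_uminus[OF N(1)]])
    fix t assume "t \<notin> uminus ` N"
    then have "- t \<notin> N" by (metis minus_minus rev_image_eqI)
    from DERIV_minus[OF DERIV_chain2[OF N(2)[OF this] dm[of t]]]
    have "((\<lambda>t. - W1 (- t)) has_real_derivative - (- k (- t) * W (- t) * - 1)) (at t)" .
    then show "((\<lambda>t. - W1 (- t)) has_real_derivative (- k t * W (- t))) (at t)"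
      by (simp add: ev)
  qed
  show ?thesis unfolding sol_def using 1 2 3 4 by blast
qed



lemma no_two_zeros:
  assumes Wsol: "sol k W W1" and Wp: "\<And>t. W t > 0" and Ysol: "sol k Y Y1"
    and ab: "a < b" and Ya: "Y a = 0" and Yb: "Y b = 0"
  shows "Y x = 0"
proof -
  have dW: "\<And>t. (W has_real_derivative W1 t) (at t)" using Wsol unfolding sol_def by auto
  have dY: "\<And>t. (Y has_real_derivative Y1 t) (at t)" using Ysol unfolding sol_def by auto
  define d where "d = W 0 * Y1 0 - W1 0 * Y 0"
  have wr: "W x * Y1 x - W1 x * Y x = d" for x unfolding d_def by (rule wr_const[OF Wsol Ysol])
  define p where "p = (\<lambda>x. Y x / W x)"
  have dp: "(p has_real_derivative d / (W x * W x)) (at x)" for x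
  proof -
    have "(p has_real_derivative (Y1 x * W x - Y x * W1 x) / (W x * W x)) (at x)"
      unfolding p_def by (rule DERIV_divide[OF dY dW]) (use Wp[of x] in simp)
    moreover have "Y1 x * W x - Y x * W1 x = d" using wr[of x] by (simp add: algebra_simps)
    ultimately show ?thesis by simp
  qed
  obtain z where z: "a < z" "z < b" "p b - p a = (b - a) * (d / (W z * W z))"
    using mvt_deriv[OF ab dp] by blast
  have "p a = 0" "p b = 0" using Ya Yb by (simp_all add: p_def)
  then have "(b - a) * (d / (W z * W z)) = 0" using z by simp
  then have d0: "d = 0" using ab Wp[of z] by simp
  have "p x = p a" by (rule DERIV_isconst_all) (use dp d0 in simp)
  then have "Y x / W x = 0" using \<open>p a = 0\<close> by (simp add: p_def)
  then show ?thesis using Wp[of x] by simp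
qed



theorem proposition3p18:
  fixes f W :: "real \<Rightarrow> real"
  assumes f_L1: "integrable lborel f"
    and f_even: "\<And>t. f (- t) = f t"
    and W_sol: "C1_weak_solution (\<lambda>t. -1 + f t) W"
    and W_pos: "\<And>t. t \<ge> 0 \<Longrightarrow> W t > 0"
    and W_lim: "(W \<longlongrightarrow> 0) at_top"
  shows "(\<forall>Y. C1_weak_solution (\<lambda>t. -1 + f t) Y \<and> (\<exists>t. Y t \<noteq> 0) \<longrightarrow>
            \<not> (\<exists>s t. s \<noteq> t \<and> Y s = 0 \<and> Y t = 0))
         \<longleftrightarrow> deriv W 0 \<le> 0"
proof -
  define k where "k = (\<lambda>t. -1 + f t)"
  have "C1_weak_solution k W" using W_sol unfolding k_def .
  then obtain W1 where Wsol: "sol k W W1" unfolding C1_sol by blast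
  have kev: "\<And>t. k (- t) = k t" by (simp add: k_def f_even)
  define V where "V = (\<lambda>t. W (- t))"
  define V1 where "V1 = (\<lambda>t. - W1 (- t))"
  have Vsol: "sol k V V1" unfolding V_def V1_def by (rule sol_reflect[OF Wsol kev])
  have dW: "\<And>t. (W has_real_derivative W1 t) (at t)" using Wsol unfolding sol_def by auto
  have dV: "\<And>t. (V has_real_derivative V1 t) (at t)" using Vsol unfolding sol_def by auto
  have derivW0: "deriv W 0 = W1 0" by (rule DERIV_imp_deriv[OF dW])
  define c where "c = W 0 * V1 0 - W1 0 * V 0"
  have W0: "W 0 > 0" using W_pos by simp
  have c_eq: "c = - 2 * W 0 * W1 0" by (simp add: c_def V_def V1_def)
  have wrWV: "W t * V1 t - W1 t * V t = c" for t unfolding c_def by (rule wr_const[OF Wsol Vsol])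
  define q where "q = (\<lambda>t. V t / W t)"
  have dq: "(q has_real_derivative c / (W t * W t)) (at t)" if "t \<ge> 0" for t
  proof -
    have "(q has_real_derivative (V1 t * W t - V t * W1 t) / (W t * W t)) (at t)"
      unfolding q_def by (rule DERIV_divide[OF dV dW]) (use W_pos[OF that] in simp)
    moreover have "V1 t * W t - V t * W1 t = c" using wrWV[of t] by (simp add: algebra_simps)
    ultimately show ?thesis by simp
  qed
  have q0: "q 0 = 1" using W0 by (simp add: q_def V_def)
  have sol_iff: "C1_weak_solution (\<lambda>t. -1 + f t) Y \<longleftrightarrow> (\<exists>Y1. sol k Y Y1)" for Y
    unfolding k_def by (rule C1_sol)
  show ?thesis
  proof
    assume L: "\<forall>Y. C1_weak_solution (\<lambda>t. -1 + f t) Y \<and> (\<exists>t. Y t \<noteq> 0) \<longrightarrow>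
            \<not> (\<exists>s t. s \<noteq> t \<and> Y s = 0 \<and> Y t = 0)"
    show "deriv W 0 \<le> 0"
    proof (rule ccontr)
      assume "\<not> deriv W 0 \<le> 0"
      then have pos: "W1 0 > 0" using derivW0 by simp
      have cneg: "c < 0" using c_eq W0 pos by (simp add: mult_pos_pos)
      have "\<forall>\<^sub>F t in at_top. W t < 1" using order_tendstoD(2)[OF W_lim, of 1] by simp
      then obtain T0 where T0: "\<And>t. t \<ge> T0 \<Longrightarrow> W t < 1" unfolding eventually_at_top_linorder by blast
      define T where "T = max T0 0"
      have T: "T \<ge> 0" "\<And>t. t \<ge> T \<Longrightarrow> W t < 1" using T0 unfolding T_def by auto
      have qbound: "q t \<le> q T + c * (t - T)" if "t \<ge> T" for t
      proof (cases "t = T")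
        case False
        then have tT: "T < t" using that by simp
        obtain z where z: "T < z" "z < t" "q t - q T = (t - T) * (c / (W z * W z))"
          using mvt_deriv[OF tT dq] T(1) by (meson order_trans)
        have wz: "W z > 0" "W z < 1" using W_pos T z by auto
        have w2: "0 < W z * W z" "W z * W z \<le> 1" using wz by (auto simp: mult_le_one)
        have "c \<le> c * (W z * W z)" using cneg w2 by (simp add: mult_le_cancel_left1)
        then have "c / (W z * W z) \<le> c" using w2 by (simp add: divide_le_eq)
        then have "(t - T) * (c / (W z * W z)) \<le> (t - T) * c" using tT by (intro mult_left_mono) auto
        then show ?thesis using z by (simp add: algebra_simps)
      qed simp
      have unb: "\<exists>u\<ge>T. q u < B" for B
      proof -
        define u where "u = T + (\<bar>q T\<bar> + \<bar>B\<bar> + 1) / (- c)"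
        have uT: "u \<ge> T" using cneg unfolding u_def by (simp add: divide_nonneg_neg)
        have "c * (u - T) = - (\<bar>q T\<bar> + \<bar>B\<bar> + 1)" using cneg unfolding u_def by (simp add: field_simps)
        then have "q u < B" using qbound[OF uT] by linarith
        then show ?thesis using uT by blast
      qed
      obtain s where s: "s \<ge> T" "q s < 0" using unb[of 0] by blast
      have Ws: "W s > 0" using W_pos T s by auto
      have Vs: "V s < 0" using s(2) Ws by (simp add: q_def divide_less_0_iff)
      have s0: "s > 0" using s q0 T by (cases "s = 0") auto
      obtain u where u: "u \<ge> T" "q u < W s / V s" using unb[of "W s / V s"] by blast
      have Wu: "W u > 0" using W_pos T u by auto
      define Z where "Z = (\<lambda>t. V s * W t + (- W s) * V t)"
      define Z1 where "Z1 = (\<lambda>t. V s * W1 t + (- W s) * V1 t)"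
      have Zsol: "sol k Z Z1" unfolding Z_def Z1_def by (rule sol_comb[OF Wsol Vsol])
      have Zs: "Z s = 0" by (simp add: Z_def)
      have Zu: "Z (- u) > 0"
      proof -
        have "q u * V s > W s / V s * V s" using mult_strict_right_mono_neg[OF u(2) Vs] by simp
        then have "q u * V s > W s" using Vs by simp
        then have "q u * V s * W u > W s * W u" using Wu by (simp add: mult_strict_right_mono)
        moreover have "q u * W u = V u" using Wu by (simp add: q_def)
        ultimately have "V s * V u > W s * W u" by (simp add: algebra_simps)
        then show ?thesis by (simp add: Z_def V_def)
      qed
      have Z0: "Z 0 < 0"
      proof -
        have "Z 0 = W 0 * (V s - W s)" by (simp add: Z_def V_def algebra_simps)
        moreover have "V s - W s < 0" using Vs Ws by simp
        ultimately show ?thesis using W0 by (simp add: mult_pos_neg)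
      qed
      have u0: "- u \<le> 0" using u T by simp
      have cZ: "continuous_on {- u..0} Z"
        by (rule continuous_on_subset[OF sol_cont[OF Zsol]]) simp
      obtain z where z: "- u \<le> z" "z \<le> 0" "Z z = 0"
        using IVT2'[of Z 0 0 "- u", OF _ _ u0 cZ] Z0 Zu by auto
      have "C1_weak_solution (\<lambda>t. -1 + f t) Z" using sol_iff Zsol by blast
      moreover have "\<exists>t. Z t \<noteq> 0" using Zu by (intro exI[of _ "- u"]) simp
      moreover have "\<exists>s t. s \<noteq> t \<and> Z s = 0 \<and> Z t = 0"
        using z Zs s0 by (intro exI[of _ s] exI[of _ z]) auto
      ultimately show False using L by blast
    qed
  next
    assume "deriv W 0 \<le> 0"
    then have nonpos: "W1 0 \<le> 0" using derivW0 by simp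
    have cnn: "c \<ge> 0" using c_eq mult_nonneg_nonpos[of "W 0" "W1 0"] W0 nonpos by simp
    have Wall: "W t > 0" for t
    proof (cases "t \<ge> 0")
      case True then show ?thesis using W_pos by simp
    next
      case False
      then have tp: "0 < - t" by simp
      obtain z where z: "0 < z" "z < - t" "q (- t) - q 0 = (- t - 0) * (c / (W z * W z))"
        using mvt_deriv[OF tp dq] by (meson less_imp_le order_trans)
      have "c / (W z * W z) \<ge> 0" using cnn by simp
      then have "(- t - 0) * (c / (W z * W z)) \<ge> 0" using tp by (intro mult_nonneg_nonneg) auto
      then have "q (- t) \<ge> 1" using z(3) q0 by linarith
      then have "V (- t) / W (- t) \<ge> 1" by (simp add: q_def)
      moreover have "W (- t) > 0" using W_pos tp by simp
      ultimately have "V (- t) \<ge> W (- t)" by (simp add: le_divide_eq)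
      then show ?thesis using \<open>W (- t) > 0\<close> by (simp add: V_def)
    qed
    show "\<forall>Y. C1_weak_solution (\<lambda>t. -1 + f t) Y \<and> (\<exists>t. Y t \<noteq> 0) \<longrightarrow>
            \<not> (\<exists>s t. s \<noteq> t \<and> Y s = 0 \<and> Y t = 0)"
    proof (intro allI impI notI)
      fix Y assume H: "C1_weak_solution (\<lambda>t. -1 + f t) Y \<and> (\<exists>t. Y t \<noteq> 0)"
        and Z: "\<exists>s t. s \<noteq> t \<and> Y s = 0 \<and> Y t = 0"
      obtain Y1 where Ysol: "sol k Y Y1" using H sol_iff by blast
      obtain x where x: "Y x \<noteq> 0" using H by blast
      obtain s t where st: "s \<noteq> t" "Y s = 0" "Y t = 0" using Z by blast
      show False
      proof (cases "s < t")
        case True then show ?thesis using no_two_zeros[OF Wsol Wall Ysol True st(2,3), of x] x by simp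
      next
        case False
        then have "t < s" using st(1) by simp
        then show ?thesis using no_two_zeros[OF Wsol Wall Ysol _ st(3,2), of x] x by simp
      qed
    qed
  qed
qed

end
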